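(* Let $(\mathcal{S},d_{\mathcal{S}})$ be a metric state space, $\mathcal{A}$ a finite action set, $\gamma\in[0,1)$, $R:\mathcal{S}\times\mathcal{A}\to\mathbb{R}$ a reward with finite $K^{\mathcal{A}}_{d_{\mathcal{S}},\mathbb{R}}(R)$, and $T$ a transition kernel with $\gamma K^{\mathcal{A}}_{d_{\mathcal{S}},W}(T)<1$. Let $f:\mathbb{R}^{|\mathcal{A}|}\to\mathbb{R}$ be one of the backup operators $\max$, $\mathrm{mean}$, $\epsilon$-greedy, or mellowmax $mm_\beta(x)=\frac{1}{\beta}\log\big(\frac{1}{|\mathcal{A}|}\sum_i e^{\beta x_i}\big)$. Consider Generalized Value Iteration (GVI): starting from $\widehat Q_0$ with finite $K^{\mathcal{A}}_{d_{\mathcal{S}},\mathbb{R}}(\widehat Q_0)$, iterate $\widehat Q_{n+1}(s,a)=R(s,a)+\gamma\int T(s'\mid s,a)\,f\big(\widehat Q_n(s',\cdot)\big)\,ds'$. Then the value function computed by GVI has Lipschitz constant bounded by $\frac{K^{\mathcal{A}}_{d_{\mathcal{S}},\mathbb{R}}(R)}{1-\gamma K^{\mathcal{A}}_{d_{\mathcal{S}},W}(T)}$; precisely, $\lim_{n\to\infty}K^{\mathcal{A}}_{d_{\mathcal{S}},\mathbb{R}}(\widehat Q_{n})\le\frac{K^{\mathcal{A}}_{d_{\mathcal{S}},\mathbb{R}}(R)}{1-\gamma K^{\mathcal{A}}_{d_{\mathcal{S}},W}(T)}$ (in the sense of $\limsup$).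
   Context: For $h:\mathcal{S}\times\mathcal{A}\to\mathbb{R}$, $K^{\mathcal{A}}_{d_{\mathcal{S}},\mathbb{R}}(h):=\sup_{a\in\mathcal{A}}\sup_{s_1\ne s_2}\frac{|h(s_1,a)-h(s_2,a)|}{d_{\mathcal{S}}(s_1,s_2)}$. $W$ is the first Wasserstein metric on distributions over $(\mathcal{S},d_{\mathcal{S}})$, and $K^{\mathcal{A}}_{d_{\mathcal{S}},W}(T):=\sup_{a}\sup_{s_1\ne s_2}\frac{W(T(\cdot\mid s_1,a),T(\cdot\mid s_2,a))}{d_{\mathcal{S}}(s_1,s_2)}$. The $\epsilon$-greedy operator is $x\mapsto(1-\epsilon)\max_i x_i+\epsilon\,\mathrm{mean}(x)$. The listed operators are Lipschitz with constant $1$ from $(\mathbb{R}^{|\mathcal{A}|},\|\cdot\|_\infty)$ to $\mathbb{R}$. *)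

theory Defs
  imports "HOL-Probability.Probability"
begin

definition lipA :: "'a set \<Rightarrow> ('s::metric_space \<Rightarrow> 'a \<Rightarrow> real) \<Rightarrow> ennreal" where
  "lipA A h = (SUP a\<in>A. SUP p\<in>{p::'s\<times>'s. fst p \<noteq> snd p}.
      ennreal (\<bar>h (fst p) a - h (snd p) a\<bar> / dist (fst p) (snd p)))"

definition couplings :: "'s::metric_space measure \<Rightarrow> 's measure \<Rightarrow> ('s \<times> 's) measure set" where
  "couplings \<mu> \<nu> = {\<pi>. sets \<pi> = sets (borel :: ('s \<times> 's) measure)
      \<and> distr \<pi> borel fst = \<mu> \<and> distr \<pi> borel snd = \<nu>}"

definition wasserstein1 :: "'s::metric_space measure \<Rightarrow> 's measure \<Rightarrow> ennreal" where
  "wasserstein1 \<mu> \<nu> = (INF \<pi>\<in>couplings \<mu> \<nu>. \<integral>\<^sup>+ p. ennreal (dist (fst p) (snd p)) \<partial>\<pi>)"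

definition lipW :: "'a set \<Rightarrow> ('s::metric_space \<Rightarrow> 'a \<Rightarrow> 's measure) \<Rightarrow> ennreal" where
  "lipW A T = (SUP a\<in>A. SUP p\<in>{p::'s\<times>'s. fst p \<noteq> snd p}.
      wasserstein1 (T (fst p) a) (T (snd p) a) / ennreal (dist (fst p) (snd p)))"

definition max_op :: "'a set \<Rightarrow> ('a \<Rightarrow> real) \<Rightarrow> real" where
  "max_op A x = Max (x ` A)"

definition mean_op :: "'a set \<Rightarrow> ('a \<Rightarrow> real) \<Rightarrow> real" where
  "mean_op A x = (\<Sum>a\<in>A. x a) / real (card A)"

definition eps_greedy_op :: "real \<Rightarrow> 'a set \<Rightarrow> ('a \<Rightarrow> real) \<Rightarrow> real" where
  "eps_greedy_op \<epsilon> A x = (1 - \<epsilon>) * max_op A x + \<epsilon> * mean_op A x"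

definition mellowmax_op :: "real \<Rightarrow> 'a set \<Rightarrow> ('a \<Rightarrow> real) \<Rightarrow> real" where
  "mellowmax_op \<beta> A x = ln ((\<Sum>a\<in>A. exp (\<beta> * x a)) / real (card A)) / \<beta>"

definition backup_ops :: "'a set \<Rightarrow> (('a \<Rightarrow> real) \<Rightarrow> real) set" where
  "backup_ops A = {max_op A, mean_op A}
     \<union> {eps_greedy_op \<epsilon> A | \<epsilon>. 0 \<le> \<epsilon> \<and> \<epsilon> \<le> 1}
     \<union> {mellowmax_op \<beta> A | \<beta>. 0 < \<beta>}"

end

theory Submission
  imports Defs
begin

lemma lipA_le:
  fixes h :: "'s::metric_space \<Rightarrow> 'b \<Rightarrow> real"
  assumes "l \<ge> 0" "\<And>a x y. a \<in> A \<Longrightarrow> \<bar>h x a - h y a\<bar> \<le> l * dist x y"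
  shows "lipA A h \<le> ennreal l"
  unfolding lipA_def
proof (intro SUP_least)
  fix a p assume a: "a \<in> A" and p: "p \<in> {p::'s\<times>'s. fst p \<noteq> snd p}"
  then have d: "dist (fst p) (snd p) > 0" by auto
  have "\<bar>h (fst p) a - h (snd p) a\<bar> / dist (fst p) (snd p) \<le> l"
    using assms(2)[OF a] d by (simp add: divide_le_eq)
  then show "ennreal (\<bar>h (fst p) a - h (snd p) a\<bar> / dist (fst p) (snd p)) \<le> ennreal l"
    by (rule ennreal_leI)
qed

lemma lipA_use:
  assumes "lipA A h < \<infinity>" "a \<in> A"
  shows "\<bar>h x a - h y a\<bar> \<le> enn2real (lipA A h) * dist x y"
proof (cases "x = y")
  case True then show ?thesis by simp
next
  case False
  then have d: "dist x y > 0" by auto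
  have "ennreal (\<bar>h x a - h y a\<bar> / dist x y) \<le> lipA A h"
    unfolding lipA_def
    apply (rule SUP_upper2[OF assms(2)])
    apply (rule SUP_upper2[where i="(x,y)"])
    using False by auto
  then have "enn2real (ennreal (\<bar>h x a - h y a\<bar> / dist x y)) \<le> enn2real (lipA A h)"
    using assms(1) by (intro enn2real_mono) auto
  then have "\<bar>h x a - h y a\<bar> / dist x y \<le> enn2real (lipA A h)" by simp
  then show ?thesis using d by (simp add: divide_le_eq)
qed

lemma op_one_side:
  assumes fin: "finite A" and ne: "A \<noteq> {}" and f: "f \<in> backup_ops A"
    and le: "\<And>a. a \<in> A \<Longrightarrow> x a \<le> y a + e"
  shows "f x \<le> f y + e"
proof -
  have maxl: "max_op A x \<le> max_op A y + e"
  proof -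
    have "Max (x ` A) \<in> x ` A" using fin ne by (intro Max_in) auto
    then obtain a where a: "a \<in> A" "Max (x ` A) = x a" by auto
    have "y a \<le> Max (y ` A)" using a fin by (intro Max_ge) auto
    then show ?thesis unfolding max_op_def using a le[of a] by simp
  qed
  have cpos: "real (card A) > 0" using fin ne by (simp add: card_gt_0_iff)
  have meanl: "mean_op A x \<le> mean_op A y + e"
  proof -
    have "(\<Sum>a\<in>A. x a) \<le> (\<Sum>a\<in>A. y a + e)" by (rule sum_mono) (rule le)
    also have "\<dots> = (\<Sum>a\<in>A. y a) + real (card A) * e" by (simp add: sum.distrib)
    finally have "(\<Sum>a\<in>A. x a) \<le> (\<Sum>a\<in>A. y a) + real (card A) * e" .
    then show ?thesis unfolding mean_op_def using cpos
      by (simp add: divide_le_eq add_divide_distrib algebra_simps)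
  qed
  show ?thesis
  proof -
    consider "f = max_op A" | "f = mean_op A" | \<epsilon> where "f = eps_greedy_op \<epsilon> A" "0 \<le> \<epsilon>" "\<epsilon> \<le> 1"
      | \<beta> where "f = mellowmax_op \<beta> A" "0 < \<beta>"
      using f unfolding backup_ops_def by blast
    then show ?thesis
    proof cases
      case 1 then show ?thesis using maxl by simp
    next
      case 2 then show ?thesis using meanl by simp
    next
      case (3 \<epsilon>)
      have "(1 - \<epsilon>) * max_op A x \<le> (1 - \<epsilon>) * (max_op A y + e)"
        using 3 maxl by (intro mult_left_mono) auto
      moreover have "\<epsilon> * mean_op A x \<le> \<epsilon> * (mean_op A y + e)"
        using 3 meanl by (intro mult_left_mono) auto
      ultimately show ?thesis using 3 unfolding eps_greedy_op_def by (simp add: algebra_simps)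
    next
      case (4 \<beta>)
      have "(\<Sum>a\<in>A. exp (\<beta> * x a)) \<le> (\<Sum>a\<in>A. exp (\<beta> * e) * exp (\<beta> * y a))"
      proof (rule sum_mono)
        fix a assume "a \<in> A"
        then have "\<beta> * x a \<le> \<beta> * e + \<beta> * y a" using le[of a] 4
          by (metis add.commute distrib_left mult_left_mono less_imp_le)
        then show "exp (\<beta> * x a) \<le> exp (\<beta> * e) * exp (\<beta> * y a)"
          by (simp add: exp_add[symmetric])
      qed
      also have "\<dots> = exp (\<beta> * e) * (\<Sum>a\<in>A. exp (\<beta> * y a))" by (simp add: sum_distrib_left)
      finally have S: "(\<Sum>a\<in>A. exp (\<beta> * x a)) \<le> exp (\<beta> * e) * (\<Sum>a\<in>A. exp (\<beta> * y a))" .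
      have Spos: "(\<Sum>a\<in>A. exp (\<beta> * x a)) > 0" using fin ne by (intro sum_pos) auto
      have Sypos: "(\<Sum>a\<in>A. exp (\<beta> * y a)) > 0" using fin ne by (intro sum_pos) auto
      have "ln ((\<Sum>a\<in>A. exp (\<beta> * x a)) / real (card A))
          \<le> ln (exp (\<beta> * e) * ((\<Sum>a\<in>A. exp (\<beta> * y a)) / real (card A)))"
        using S Spos cpos by (subst ln_le_cancel_iff) (auto simp: divide_right_mono)
      also have "\<dots> = \<beta> * e + ln ((\<Sum>a\<in>A. exp (\<beta> * y a)) / real (card A))"
        using Sypos cpos by (subst ln_mult) auto
      finally have "ln ((\<Sum>a\<in>A. exp (\<beta> * x a)) / real (card A))
          \<le> \<beta> * e + ln ((\<Sum>a\<in>A. exp (\<beta> * y a)) / real (card A))" .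
      then show ?thesis using 4 unfolding mellowmax_op_def
        by (simp add: divide_le_eq add_divide_distrib algebra_simps)
    qed
  qed
qed

lemma op_lip:
  assumes fin: "finite A" and ne: "A \<noteq> {}" and f: "f \<in> backup_ops A"
    and le: "\<And>a. a \<in> A \<Longrightarrow> \<bar>x a - y a\<bar> \<le> e"
  shows "\<bar>f x - f y\<bar> \<le> e"
proof -
  have "f x \<le> f y + e" using le by (intro op_one_side[OF fin ne f]) (force simp: abs_le_iff)
  moreover have "f y \<le> f x + e" using le by (intro op_one_side[OF fin ne f]) (force simp: abs_le_iff)
  ultimately show ?thesis by linarith
qed


lemma coupling_bound:
  fixes g :: "'s::metric_space \<Rightarrow> real"
  assumes L: "L \<ge> 0" "\<And>x y. \<bar>g x - g y\<bar> \<le> L * dist x y"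
    and pi: "\<pi> \<in> couplings \<mu> \<nu>"
    and C: "(\<integral>\<^sup>+ p. ennreal (dist (fst p) (snd p)) \<partial>\<pi>) < \<infinity>"
  shows "\<bar>integral\<^sup>L \<mu> g - integral\<^sup>L \<nu> g\<bar>
     \<le> L * enn2real (\<integral>\<^sup>+ p. ennreal (dist (fst p) (snd p)) \<partial>\<pi>)"
proof -
  have sp: "sets \<pi> = sets (borel :: ('s \<times> 's) measure)" and mu: "\<mu> = distr \<pi> borel fst"
    and nu: "\<nu> = distr \<pi> borel snd" using pi unfolding couplings_def by auto
  have gc: "continuous_on UNIV g"
    by (rule lipschitz_on_continuous_on[where L=L]) (auto simp: lipschitz_on_def dist_real_def L)
  have gm: "g \<in> borel_measurable borel" using gc by (rule borel_measurable_continuous_onI)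
  have mfst: "fst \<in> \<pi> \<rightarrow>\<^sub>M (borel :: 's measure)"
    unfolding measurable_cong_sets[OF sp refl]
    by (intro borel_measurable_continuous_onI continuous_intros)
  have msnd: "snd \<in> \<pi> \<rightarrow>\<^sub>M (borel :: 's measure)"
    unfolding measurable_cong_sets[OF sp refl]
    by (intro borel_measurable_continuous_onI continuous_intros)
  have dm: "(\<lambda>p. dist (fst p) (snd p)) \<in> borel_measurable \<pi>"
    unfolding measurable_cong_sets[OF sp refl]
    by (intro borel_measurable_continuous_onI continuous_intros)
  have gfm: "(\<lambda>p. g (fst p)) \<in> borel_measurable \<pi>" using gm mfst by measurable
  have gsm: "(\<lambda>p. g (snd p)) \<in> borel_measurable \<pi>" using gm msnd by measurable
  have dint: "integrable \<pi> (\<lambda>p. dist (fst p) (snd p))"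
    using dm C by (intro integrableI_bounded) auto
  have dval: "(\<integral>p. dist (fst p) (snd p) \<partial>\<pi>) = enn2real (\<integral>\<^sup>+ p. ennreal (dist (fst p) (snd p)) \<partial>\<pi>)"
    using dm by (intro integral_eq_nn_integral) auto
  have imu: "integral\<^sup>L \<mu> g = (\<integral>p. g (fst p) \<partial>\<pi>)" unfolding mu by (rule integral_distr[OF mfst gm])
  have inu: "integral\<^sup>L \<nu> g = (\<integral>p. g (snd p) \<partial>\<pi>)" unfolding nu by (rule integral_distr[OF msnd gm])
  have b1: "norm (g (snd p)) \<le> norm (\<bar>g (fst p)\<bar> + L * dist (fst p) (snd p))" for p
    using L(2)[of "fst p" "snd p"] L(1) by auto
  have b2: "norm (g (fst p)) \<le> norm (\<bar>g (snd p)\<bar> + L * dist (fst p) (snd p))" for p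
    using L(2)[of "fst p" "snd p"] L(1) by auto
  show ?thesis
  proof (cases "integrable \<pi> (\<lambda>p. g (fst p))")
    case True
    have i2: "integrable \<pi> (\<lambda>p. g (snd p))"
      by (rule Bochner_Integration.integrable_bound[where f="\<lambda>p. \<bar>g (fst p)\<bar> + L * dist (fst p) (snd p)"])
        (use True dint gsm b1 in auto)
    have "\<bar>(\<integral>p. g (fst p) \<partial>\<pi>) - (\<integral>p. g (snd p) \<partial>\<pi>)\<bar> = \<bar>\<integral>p. g (fst p) - g (snd p) \<partial>\<pi>\<bar>"
      using True i2 by simp
    also have "\<dots> \<le> (\<integral>p. \<bar>g (fst p) - g (snd p)\<bar> \<partial>\<pi>)" by (rule integral_abs_bound)
    also have "\<dots> \<le> (\<integral>p. L * dist (fst p) (snd p) \<partial>\<pi>)"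
      using True i2 dint L by (intro integral_mono) auto
    also have "\<dots> = L * (\<integral>p. dist (fst p) (snd p) \<partial>\<pi>)" by simp
    finally have "\<bar>(\<integral>p. g (fst p) \<partial>\<pi>) - (\<integral>p. g (snd p) \<partial>\<pi>)\<bar> \<le> L * (\<integral>p. dist (fst p) (snd p) \<partial>\<pi>)" .
    then show ?thesis by (simp only: imu inu dval)
  next
    case False
    have i2: "\<not> integrable \<pi> (\<lambda>p. g (snd p))"
    proof
      assume i: "integrable \<pi> (\<lambda>p. g (snd p))"
      have "integrable \<pi> (\<lambda>p. g (fst p))"
        by (rule Bochner_Integration.integrable_bound[where f="\<lambda>p. \<bar>g (snd p)\<bar> + L * dist (fst p) (snd p)"])
          (use i dint gfm b2 in auto)
      then show False using False by simp
    qed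
    have "0 \<le> L * enn2real (\<integral>\<^sup>+ p. ennreal (dist (fst p) (snd p)) \<partial>\<pi>)"
      using L(1) by simp
    then show ?thesis unfolding imu inu not_integrable_integral_eq[OF False] not_integrable_integral_eq[OF i2]
      by simp
  qed
qed


lemma wasserstein_bound:
  fixes g :: "'s::metric_space \<Rightarrow> real"
  assumes L: "L \<ge> 0" "\<And>x y. \<bar>g x - g y\<bar> \<le> L * dist x y"
    and W: "wasserstein1 \<mu> \<nu> < \<infinity>"
  shows "\<bar>integral\<^sup>L \<mu> g - integral\<^sup>L \<nu> g\<bar> \<le> L * enn2real (wasserstein1 \<mu> \<nu>)"
proof (rule field_le_epsilon)
  fix e :: real assume e: "0 < e"
  define w where "w = enn2real (wasserstein1 \<mu> \<nu>)"
  define \<epsilon> where "\<epsilon> = e / (L + 1)"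
  have eps: "\<epsilon> > 0" using e L(1) unfolding \<epsilon>_def by simp
  have Lle: "L * \<epsilon> \<le> e" using e L(1) unfolding \<epsilon>_def by (simp add: field_simps)
  have w0: "w \<ge> 0" unfolding w_def by simp
  have "wasserstein1 \<mu> \<nu> = ennreal w" unfolding w_def using W by simp
  also have "\<dots> < ennreal (w + \<epsilon>)" using eps w0 by (simp add: ennreal_lessI)
  finally have "(INF \<pi>\<in>couplings \<mu> \<nu>. \<integral>\<^sup>+ p. ennreal (dist (fst p) (snd p)) \<partial>\<pi>) < ennreal (w + \<epsilon>)"
    unfolding wasserstein1_def .
  then obtain \<pi> where pi: "\<pi> \<in> couplings \<mu> \<nu>"
    and lt: "(\<integral>\<^sup>+ p. ennreal (dist (fst p) (snd p)) \<partial>\<pi>) < ennreal (w + \<epsilon>)"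
    unfolding INF_less_iff by blast
  have fin: "(\<integral>\<^sup>+ p. ennreal (dist (fst p) (snd p)) \<partial>\<pi>) < \<infinity>"
    using lt less_top by fastforce
  have "enn2real (\<integral>\<^sup>+ p. ennreal (dist (fst p) (snd p)) \<partial>\<pi>) \<le> w + \<epsilon>"
    using lt eps w0 by (intro enn2real_leI) auto
  then have "L * enn2real (\<integral>\<^sup>+ p. ennreal (dist (fst p) (snd p)) \<partial>\<pi>) \<le> L * (w + \<epsilon>)"
    using L(1) by (simp add: mult_left_mono)
  moreover have "\<bar>integral\<^sup>L \<mu> g - integral\<^sup>L \<nu> g\<bar> \<le> L * enn2real (\<integral>\<^sup>+ p. ennreal (dist (fst p) (snd p)) \<partial>\<pi>)"
    by (rule coupling_bound[OF L pi fin])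
  ultimately show "\<bar>integral\<^sup>L \<mu> g - integral\<^sup>L \<nu> g\<bar> \<le> L * enn2real (wasserstein1 \<mu> \<nu>) + e"
    using Lle unfolding w_def by (simp add: algebra_simps)
qed

theorem theorem3:
  fixes A :: "'a set" and \<gamma> :: real
    and R :: "'s::metric_space \<Rightarrow> 'a \<Rightarrow> real"
    and T :: "'s \<Rightarrow> 'a \<Rightarrow> 's measure"
    and f :: "('a \<Rightarrow> real) \<Rightarrow> real"
    and Q :: "nat \<Rightarrow> 's \<Rightarrow> 'a \<Rightarrow> real"
  assumes A_fin: "finite A" and A_ne: "A \<noteq> {}"
    and gamma: "0 \<le> \<gamma>" "\<gamma> < 1"
    and R_lip: "lipA A R < \<infinity>"
    and T_prob: "\<And>s a. a \<in> A \<Longrightarrow> prob_space (T s a)"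
    and T_sets: "\<And>s a. a \<in> A \<Longrightarrow> sets (T s a) = sets borel"
    and T_lip: "ennreal \<gamma> * lipW A T < 1"
    and f_op: "f \<in> backup_ops A"
    and Q0_lip: "lipA A (Q 0) < \<infinity>"
    and GVI: "\<And>n s a. a \<in> A \<Longrightarrow>
       Q (Suc n) s a = R s a + \<gamma> * (\<integral>s'. f (Q n s') \<partial>(T s a))"
  shows "limsup (\<lambda>n. lipA A (Q n)) \<le> lipA A R / (1 - ennreal \<gamma> * lipW A T)"
proof -
  define \<rho> where "\<rho> = enn2real (lipA A R)"
  define c where "c = enn2real (ennreal \<gamma> * lipW A T)"
  define l0 where "l0 = enn2real (lipA A (Q 0))"
  define M where "M = \<rho> / (1 - c)"
  define l where "l n = c ^ n * l0 + M" for n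
  have cfin: "ennreal \<gamma> * lipW A T < \<infinity>" using T_lip ennreal_one_less_top infinity_ennreal_def by order
  have cE: "ennreal c = ennreal \<gamma> * lipW A T" unfolding c_def using cfin by simp
  have c0: "c \<ge> 0" unfolding c_def by simp
  have c1: "c < 1" using T_lip cE c0 by (metis ennreal_less_one_iff)
  have rho0: "\<rho> \<ge> 0" unfolding \<rho>_def by simp
  have l00: "l0 \<ge> 0" unfolding l0_def by simp
  have M0: "M \<ge> 0" unfolding M_def using rho0 c1 by simp
  have l_nonneg: "l n \<ge> 0" for n unfolding l_def using c0 l00 M0 by simp
  have l_Suc: "l (Suc n) = \<rho> + c * l n" for n
  proof -
    have "M = \<rho> + c * M" unfolding M_def using c1 by (simp add: field_simps)
    then show ?thesis unfolding l_def by (simp add: algebra_simps)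
  qed
  have Rb: "\<bar>R x a - R y a\<bar> \<le> \<rho> * dist x y" if "a \<in> A" for x y a
    unfolding \<rho>_def by (rule lipA_use[OF R_lip that])
  have main: "\<forall>a\<in>A. \<forall>x y. \<bar>Q n x a - Q n y a\<bar> \<le> l n * dist x y" for n
  proof (induction n)
    case 0
    show ?case
    proof (intro ballI allI)
      fix a x y assume a: "a \<in> A"
      have "\<bar>Q 0 x a - Q 0 y a\<bar> \<le> l0 * dist x y" unfolding l0_def by (rule lipA_use[OF Q0_lip a])
      also have "\<dots> \<le> l 0 * dist x y" unfolding l_def using M0 by (intro mult_right_mono) auto
      finally show "\<bar>Q 0 x a - Q 0 y a\<bar> \<le> l 0 * dist x y" .
    qed
  next
    case (Suc n)
    define G where "G s' = f (Q n s')" for s'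
    have Glip: "\<bar>G u - G v\<bar> \<le> l n * dist u v" for u v
      unfolding G_def by (rule op_lip[OF A_fin A_ne f_op]) (use Suc.IH in auto)
    show ?case
    proof (intro ballI allI)
      fix a x y assume a: "a \<in> A"
      have eq: "Q (Suc n) x a - Q (Suc n) y a = (R x a - R y a) + \<gamma> * (integral\<^sup>L (T x a) G - integral\<^sup>L (T y a) G)"
        using GVI[OF a, of n x] GVI[OF a, of n y] unfolding G_def by (simp add: algebra_simps)
      have key: "\<gamma> * \<bar>integral\<^sup>L (T x a) G - integral\<^sup>L (T y a) G\<bar> \<le> c * l n * dist x y"
      proof (cases "\<gamma> = 0 \<or> x = y")
        case True then show ?thesis using c0 l_nonneg[of n] by auto
      next
        case False
        then have gpos: "\<gamma> > 0" and xy: "x \<noteq> y" using gamma by auto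
        have d: "dist x y > 0" using xy by simp
        have "wasserstein1 (T x a) (T y a) / ennreal (dist x y) \<le> lipW A T"
          unfolding lipW_def
          apply (rule SUP_upper2[OF a])
          apply (rule SUP_upper2[where i="(x,y)"])
          using xy by auto
        then have "wasserstein1 (T x a) (T y a) / ennreal (dist x y) * ennreal (dist x y) \<le> lipW A T * ennreal (dist x y)"
          by (rule mult_right_mono) simp
        then have Wle: "wasserstein1 (T x a) (T y a) \<le> lipW A T * ennreal (dist x y)"
          using d by (simp add: ennreal_divide_times)
        have "ennreal \<gamma> * wasserstein1 (T x a) (T y a) \<le> ennreal \<gamma> * (lipW A T * ennreal (dist x y))"
          by (rule mult_left_mono[OF Wle]) simp
        also have "\<dots> = ennreal \<gamma> * lipW A T * ennreal (dist x y)" by (simp only: mult.assoc)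
        also have "\<dots> = ennreal (c * dist x y)" using cE c0 by (simp add: ennreal_mult)
        finally have gW: "ennreal \<gamma> * wasserstein1 (T x a) (T y a) \<le> ennreal (c * dist x y)" .
        have Wfin: "wasserstein1 (T x a) (T y a) < \<infinity>"
        proof (rule ccontr)
          assume "\<not> ?thesis"
          then have "wasserstein1 (T x a) (T y a) = \<infinity>"
            by (metis top.not_eq_extremum infinity_ennreal_def)
          then have "ennreal \<gamma> * wasserstein1 (T x a) (T y a) = \<infinity>" using gpos by (simp add: ennreal_mult_top)
          then show False using gW by (simp add: top_unique)
        qed
        have cd0: "c * dist x y \<ge> 0" using c0 by simp
        have gW': "\<gamma> * enn2real (wasserstein1 (T x a) (T y a)) \<le> c * dist x y"
          using gW gamma(1) cd0 by (metis enn2real_ennreal enn2real_leI enn2real_mult)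
        have "\<gamma> * \<bar>integral\<^sup>L (T x a) G - integral\<^sup>L (T y a) G\<bar> \<le> \<gamma> * (l n * enn2real (wasserstein1 (T x a) (T y a)))"
          by (rule mult_left_mono[OF wasserstein_bound[OF l_nonneg Glip Wfin]]) (use gamma in simp)
        also have "\<dots> = l n * (\<gamma> * enn2real (wasserstein1 (T x a) (T y a)))" by simp
        also have "\<dots> \<le> l n * (c * dist x y)" by (rule mult_left_mono[OF gW' l_nonneg])
        finally show ?thesis by (simp add: algebra_simps)
      qed
      have "\<bar>Q (Suc n) x a - Q (Suc n) y a\<bar> \<le> \<bar>R x a - R y a\<bar> + \<gamma> * \<bar>integral\<^sup>L (T x a) G - integral\<^sup>L (T y a) G\<bar>"
        unfolding eq using gamma by (metis abs_mult_pos' abs_triangle_ineq)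
      also have "\<dots> \<le> \<rho> * dist x y + c * l n * dist x y" using Rb[OF a, of x y] key by linarith
      also have "\<dots> = l (Suc n) * dist x y" unfolding l_Suc by (simp add: algebra_simps)
      finally show "\<bar>Q (Suc n) x a - Q (Suc n) y a\<bar> \<le> l (Suc n) * dist x y" .
    qed
  qed
  have bound: "lipA A (Q n) \<le> ennreal (l n)" for n
    using main[of n] by (intro lipA_le l_nonneg) auto
  have lim: "(\<lambda>n. ennreal (l n)) \<longlonglongrightarrow> ennreal M"
  proof (rule tendsto_ennrealI)
    have p: "(\<lambda>n. c ^ n) \<longlonglongrightarrow> 0" using LIMSEQ_power_zero[of c] c0 c1 by simp
    have "(\<lambda>n. c ^ n * l0 + M) \<longlonglongrightarrow> 0 * l0 + M"
      by (rule tendsto_add[OF tendsto_mult[OF p tendsto_const] tendsto_const])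
    then show "l \<longlonglongrightarrow> M" unfolding l_def by simp
  qed
  have "limsup (\<lambda>n. lipA A (Q n)) \<le> limsup (\<lambda>n. ennreal (l n))"
    using bound by (intro Limsup_mono) simp
  also have "\<dots> = ennreal M" using lim by (intro lim_imp_Limsup) simp_all
  also have "\<dots> = lipA A R / (1 - ennreal \<gamma> * lipW A T)"
  proof -
    have "lipA A R = ennreal \<rho>" unfolding \<rho>_def using R_lip by simp
    moreover have "1 - ennreal \<gamma> * lipW A T = ennreal (1 - c)"
      using c0 by (simp add: cE[symmetric] ennreal_minus[symmetric])
    ultimately show ?thesis unfolding M_def using rho0 c1 by (simp add: divide_ennreal)
  qed
  finally show ?thesis .
qed

end
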